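(* Let $(T,\mathcal{V})$ be a tree decomposition of a graph $G$. For every node $t\in V(T)$, let $\mathscr{C}(t)$ be a set of cycles of $G$ each of which is fenced by $V_t$ but is not contained in $G[V_t]$ (i.e. its vertex set is not a subset of $V_t$). If $\mathscr{C}(t)\neq\emptyset$ for every node $t\in V(T)$, then there exist an edge $tt'\in E(T)$ and cycles $C\in\mathscr{C}(t)$ and $D\in\mathscr{C}(t')$ such that $\mathrm{Br}_t(C)=\mathrm{Br}_t(t')$ and $\mathrm{Br}_{t'}(D)=\mathrm{Br}_{t'}(t)$.
   Context: A tree decomposition of $G$ is a pair $(T,\mathcal{V})$ where $T$ is a tree and $\mathcal{V}=\{V_t : t\in V(T)\}$ is a collection of subsets (bags) of $V(G)$ such that every vertex of $G$ lies in some bag, every edge of $G$ has both ends in some bag, and for every vertex $v$ the set of nodes whose bags contain $v$ induces a connected subtree of $T$. For $S\subseteq V(G)$, $S$ separates a set $X$ of vertices if two vertices of $X$ lie in different components of $G-S$. A path or cycle $C'$ crosses $S$ if $S$ separates $V(C')$; otherwise $S$ fences $C'$. For distinct nodes $t,t'$, $\mathrm{Br}_t(t')$ denotes the component of $T-t$ containing $t'$. For a vertex $v\notin V_t$, $\mathrm{Br}_t(v)$ is the component of $T-t$ containing the nodes whose bags contain $v$. For a path or cycle $C'$ fenced by $V_t$ with $V(C')\not\subseteq V_t$, all $v\in V(C')\setminus V_t$ have the same $\mathrm{Br}_t(v)$, denoted $\mathrm{Br}_t(C')$. *)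

theory Defs
  imports Main
begin

definition graph :: "'a set \<Rightarrow> 'a set set \<Rightarrow> bool" where
  "graph V E \<longleftrightarrow> finite V \<and> (\<forall>e\<in>E. \<exists>u v. e = {u, v} \<and> u \<noteq> v \<and> u \<in> V \<and> v \<in> V)"

definition adj_in :: "'a set set \<Rightarrow> 'a set \<Rightarrow> 'a \<Rightarrow> 'a \<Rightarrow> bool" where
  "adj_in E W u v \<longleftrightarrow> u \<in> W \<and> v \<in> W \<and> {u, v} \<in> E"

definition connected_set :: "'a set set \<Rightarrow> 'a set \<Rightarrow> bool" where
  "connected_set E S \<longleftrightarrow> (\<forall>x\<in>S. \<forall>y\<in>S. (adj_in E S)\<^sup>*\<^sup>* x y)"

definition is_cycle :: "'a set \<Rightarrow> 'a set set \<Rightarrow> 'a list \<Rightarrow> bool" where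
  "is_cycle V E cs \<longleftrightarrow> length cs \<ge> 3 \<and> distinct cs \<and> set cs \<subseteq> V \<and>
     (\<forall>i < length cs. {cs ! i, cs ! ((i + 1) mod length cs)} \<in> E)"

definition tree :: "'n set \<Rightarrow> 'n set set \<Rightarrow> bool" where
  "tree VT ET \<longleftrightarrow> graph VT ET \<and> VT \<noteq> {} \<and> connected_set ET VT \<and> \<not> (\<exists>cs. is_cycle VT ET cs)"

definition tree_decomposition ::
  "'a set \<Rightarrow> 'a set set \<Rightarrow> 'n set \<Rightarrow> 'n set set \<Rightarrow> ('n \<Rightarrow> 'a set) \<Rightarrow> bool" where
  "tree_decomposition V E VT ET bag \<longleftrightarrow>
     tree VT ET \<and>
     (\<forall>t\<in>VT. bag t \<subseteq> V) \<and>
     (\<forall>v\<in>V. \<exists>t\<in>VT. v \<in> bag t) \<and>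
     (\<forall>e\<in>E. \<exists>t\<in>VT. e \<subseteq> bag t) \<and>
     (\<forall>v\<in>V. connected_set ET {t\<in>VT. v \<in> bag t})"

definition separates :: "'a set \<Rightarrow> 'a set set \<Rightarrow> 'a set \<Rightarrow> 'a set \<Rightarrow> bool" where
  "separates V E S X \<longleftrightarrow>
     (\<exists>x\<in>X. \<exists>y\<in>X. x \<in> V - S \<and> y \<in> V - S \<and> \<not> (adj_in E (V - S))\<^sup>*\<^sup>* x y)"

definition fences :: "'a set \<Rightarrow> 'a set set \<Rightarrow> 'a set \<Rightarrow> 'a list \<Rightarrow> bool" where
  "fences V E S C \<longleftrightarrow> \<not> separates V E S (set C)"

definition Br :: "'n set \<Rightarrow> 'n set set \<Rightarrow> 'n \<Rightarrow> 'n \<Rightarrow> 'n set" where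
  "Br VT ET t t' = {s. (adj_in ET (VT - {t}))\<^sup>*\<^sup>* t' s}"

text \<open>Br_t(v) for a vertex v not in V_t: the component of T - t containing the nodes whose bags contain v.\<close>
definition Br_vertex :: "'n set \<Rightarrow> 'n set set \<Rightarrow> ('n \<Rightarrow> 'a set) \<Rightarrow> 'n \<Rightarrow> 'a \<Rightarrow> 'n set" where
  "Br_vertex VT ET bag t v = Br VT ET t (SOME s. s \<in> VT \<and> v \<in> bag s)"

text \<open>Br_t(C) for C fenced by V_t and not contained in V_t: the common Br_t(v), v in V(C) - V_t.\<close>
definition Br_cycle :: "'n set \<Rightarrow> 'n set set \<Rightarrow> ('n \<Rightarrow> 'a set) \<Rightarrow> 'n \<Rightarrow> 'a list \<Rightarrow> 'n set" where
  "Br_cycle VT ET bag t C = Br_vertex VT ET bag t (SOME v. v \<in> set C \<and> v \<notin> bag t)"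

end

theory Submission
  imports Defs
begin

lemma adj_sym_rtr:
  assumes "(adj_in ET W)\<^sup>*\<^sup>* a b" shows "(adj_in ET W)\<^sup>*\<^sup>* b a"
  using assms
proof (induction rule: rtranclp_induct)
  case base then show ?case by simp
next
  case (step y z)
  have "adj_in ET W z y" using step(2) by (auto simp: adj_in_def insert_commute)
  then show ?case using step(3) by (meson converse_rtranclp_into_rtranclp)
qed

lemma br_neighbor_aux:
  assumes "(adj_in ET VT)\<^sup>*\<^sup>* t s" "s \<noteq> t"
  shows "\<exists>t'. {t, t'} \<in> ET \<and> (adj_in ET (VT - {t}))\<^sup>*\<^sup>* t' s"
  using assms
proof (induction rule: rtranclp_induct)
  case base then show ?case by simp
next
  case (step y z)
  show ?case
  proof (cases "y = t")
    case True
    then show ?thesis using step(2) by (auto simp: adj_in_def)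
  next
    case False
    then obtain t' where t': "{t, t'} \<in> ET" "(adj_in ET (VT - {t}))\<^sup>*\<^sup>* t' y" using step by blast
    have "adj_in ET (VT - {t}) y z" using step(2) False step(4) by (auto simp: adj_in_def)
    then show ?thesis using t' by (meson rtranclp.rtrancl_into_rtrancl)
  qed
qed

lemma br_neighbor:
  assumes "tree VT ET" "t \<in> VT" "s \<in> VT" "s \<noteq> t"
  shows "\<exists>t'. {t, t'} \<in> ET \<and> Br VT ET t s = Br VT ET t t'"
proof -
  have "connected_set ET VT" using assms(1) by (simp add: tree_def)
  then have "(adj_in ET VT)\<^sup>*\<^sup>* t s" using assms(2,3) unfolding connected_set_def by simp
  then obtain t' where t': "{t, t'} \<in> ET" "(adj_in ET (VT - {t}))\<^sup>*\<^sup>* t' s"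
    using br_neighbor_aux[OF _ assms(4)] by metis
  have r: "(adj_in ET (VT - {t}))\<^sup>*\<^sup>* s t'" by (rule adj_sym_rtr[OF t'(2)])
  have "Br VT ET t s = Br VT ET t t'"
    unfolding Br_def
  proof (intro Collect_cong iffI)
    fix x assume "(adj_in ET (VT - {t}))\<^sup>*\<^sup>* s x"
    then show "(adj_in ET (VT - {t}))\<^sup>*\<^sup>* t' x" using t'(2) by (rule rtranclp_trans[rotated])
  next
    fix x assume "(adj_in ET (VT - {t}))\<^sup>*\<^sup>* t' x"
    then show "(adj_in ET (VT - {t}))\<^sup>*\<^sup>* s x" using r by (rule rtranclp_trans[rotated])
  qed
  then show ?thesis using t'(1) by (intro exI[of _ t']) simp
qed

lemma tree_no_loop:
  assumes "tree VT ET" shows "{x, x} \<notin> ET"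
proof
  assume "{x, x} \<in> ET"
  moreover have "graph VT ET" using assms by (simp add: tree_def)
  ultimately obtain u v where "{x,x} = {u,v}" "u \<noteq> v"
    unfolding graph_def by blast
  then show False by (metis doubleton_eq_iff)
qed

lemma tree_edge_in:
  assumes "tree VT ET" "{x, y} \<in> ET" shows "y \<in> VT"
proof -
  have "graph VT ET" using assms by (simp add: tree_def)
  then obtain u v where "{x,y} = {u,v}" "u \<in> VT" "v \<in> VT"
    using assms(2) unfolding graph_def by blast
  then show ?thesis by (metis doubleton_eq_iff)
qed

lemma tree_two_cycle:
  assumes T: "tree VT ET" and f: "\<forall>t\<in>VT. {t, f t} \<in> ET"
  shows "\<exists>t\<in>VT. f (f t) = t"
proof (rule ccontr)
  assume H: "\<not> ?thesis"
  from T have fin: "finite VT" and ne: "VT \<noteq> {}" unfolding tree_def graph_def by auto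
  obtain t0 where t0: "t0 \<in> VT" using ne by blast
  define g where "g n = (f ^^ n) t0" for n
  have fV: "\<And>x. x \<in> VT \<Longrightarrow> f x \<in> VT" using f tree_edge_in[OF T] by blast
  have gV: "g n \<in> VT" for n by (induction n) (auto simp: g_def t0 fV)
  have gS: "g (Suc n) = f (g n)" for n by (simp add: g_def)
  have "\<not> inj g"
  proof
    assume "inj g"
    then have "infinite (range g)" by (simp add: finite_image_iff)
    moreover have "range g \<subseteq> VT" using gV by auto
    ultimately show False using fin finite_subset by blast
  qed
  then obtain a b where "g a = g b" "a \<noteq> b" unfolding inj_def by blast
  then have ex: "\<exists>j. \<exists>i<j. g i = g j" by (metis nat_neq_iff)
  define j where "j = (LEAST j. \<exists>i<j. g i = g j)"
  have "\<exists>i<j. g i = g j" unfolding j_def by (rule LeastI_ex[OF ex])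
  then obtain i where ij: "i < j" "g i = g j" by blast
  have minj: "\<And>j' i'. i' < j' \<Longrightarrow> g i' = g j' \<Longrightarrow> j \<le> j'"
    unfolding j_def by (rule Least_le) blast
  define cs where "cs = map g [i..<j]"
  have len: "length cs = j - i" by (simp add: cs_def)
  have dist: "distinct cs"
    unfolding cs_def distinct_map
  proof
    show "inj_on g (set [i..<j])"
    proof (rule inj_onI)
      fix x y assume "x \<in> set [i..<j]" "y \<in> set [i..<j]" "g x = g y"
      then have xy: "i \<le> x" "x < j" "i \<le> y" "y < j" "g x = g y" by auto
      show "x = y"
      proof (rule ccontr)
        assume "x \<noteq> y"
        then consider "x < y" | "y < x" by linarith
        then show False
        proof cases
          case 1 then show False using minj[of x y] xy by linarith
        next
          case 2 then show False using minj[of y x] xy(5)[symmetric] xy(2) by linarith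
        qed
      qed
    qed
  qed simp
  have gadd: "g (i + k + 1) = f (g (i + k))" for k using gS by simp
  have n1: "j - i \<noteq> 1"
  proof
    assume "j - i = 1"
    then have "j = i + 0 + 1" using ij by simp
    then have "g i = f (g i)" using ij gadd[of 0] by simp
    then show False using f gV[of i] tree_no_loop[OF T, of "g i"] by metis
  qed
  have n2: "j - i \<noteq> 2"
  proof
    assume "j - i = 2"
    then have "j = i + 1 + 1" using ij by simp
    then have "g i = f (f (g i))" using ij gadd[of 1] gadd[of 0] by simp
    then show False using H gV[of i] by metis
  qed
  have "is_cycle VT ET cs"
    unfolding is_cycle_def
  proof (intro conjI allI impI)
    show "3 \<le> length cs" using len n1 n2 ij by simp
    show "distinct cs" by (rule dist)
    show "set cs \<subseteq> VT" using gV by (auto simp: cs_def)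
    fix k assume k: "k < length cs"
    have c1: "cs ! k = g (i + k)" using k len by (simp add: cs_def)
    have c2: "cs ! ((k + 1) mod length cs) = g (i + k + 1)"
    proof (cases "k + 1 < length cs")
      case True then show ?thesis using len by (simp add: cs_def)
    next
      case False
      then have "k + 1 = length cs" using k by simp
      then have "(k + 1) mod length cs = 0" "i + k + 1 = j" using len ij by auto
      then show ?thesis using len ij by (simp add: cs_def)
    qed
    show "{cs ! k, cs ! ((k + 1) mod length cs)} \<in> ET"
    proof -
      have "{g (i + k), f (g (i + k))} \<in> ET" using f gV by blast
      then show ?thesis unfolding c1 c2 gadd .
    qed
  qed
  moreover have "\<not> (\<exists>cs. is_cycle VT ET cs)" using T by (simp add: tree_def)
  ultimately show False by blast
qed

theorem lemma5p3:
  fixes V :: "'a set" and E :: "'a set set"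
    and VT :: "'n set" and ET :: "'n set set" and bag :: "'n \<Rightarrow> 'a set"
    and \<C> :: "'n \<Rightarrow> 'a list set"
  assumes "graph V E"
    and "tree_decomposition V E VT ET bag"
    and "\<forall>t\<in>VT. \<forall>C\<in>\<C> t. is_cycle V E C \<and> fences V E (bag t) C \<and> \<not> set C \<subseteq> bag t"
    and "\<forall>t\<in>VT. \<C> t \<noteq> {}"
  shows "\<exists>t t'. {t, t'} \<in> ET \<and> (\<exists>C\<in>\<C> t. \<exists>D\<in>\<C> t'.
           Br_cycle VT ET bag t C = Br VT ET t t' \<and> Br_cycle VT ET bag t' D = Br VT ET t' t)"
proof -
  have T: "tree VT ET" using assms(2) unfolding tree_decomposition_def by blast
  define Cc where "Cc t = (SOME C. C \<in> \<C> t)" for t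
  have Cc: "Cc t \<in> \<C> t" if "t \<in> VT" for t
    using assms(4) that unfolding Cc_def by (meson ex_in_conv someI_ex)
  have nb: "\<exists>t'. {t, t'} \<in> ET \<and> Br_cycle VT ET bag t (Cc t) = Br VT ET t t'" if t: "t \<in> VT" for t
  proof -
    let ?C = "Cc t"
    have cyc: "is_cycle V E ?C" "\<not> set ?C \<subseteq> bag t" using assms(3) Cc[OF t] t by auto
    define v where "v = (SOME v. v \<in> set ?C \<and> v \<notin> bag t)"
    have v: "v \<in> set ?C" "v \<notin> bag t" unfolding v_def using cyc(2) by (metis (mono_tags, lifting) someI_ex subsetI)+
    have vV: "v \<in> V" using v cyc(1) unfolding is_cycle_def by blast
    define s where "s = (SOME s. s \<in> VT \<and> v \<in> bag s)"
    have s: "s \<in> VT" "v \<in> bag s" unfolding s_def using assms(2) vV unfolding tree_decomposition_def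
      by (metis (mono_tags, lifting) someI_ex)+
    have "s \<noteq> t" using s v by blast
    then obtain t' where t': "{t, t'} \<in> ET" "Br VT ET t s = Br VT ET t t'"
      using br_neighbor[OF T t s(1)] by blast
    have "Br_cycle VT ET bag t ?C = Br VT ET t s"
      unfolding Br_cycle_def Br_vertex_def v_def[symmetric] s_def[symmetric] by simp
    then show ?thesis using t' by metis
  qed
  define f where "f t = (SOME t'. {t, t'} \<in> ET \<and> Br_cycle VT ET bag t (Cc t) = Br VT ET t t')" for t
  have fp: "{t, f t} \<in> ET \<and> Br_cycle VT ET bag t (Cc t) = Br VT ET t (f t)" if "t \<in> VT" for t
    unfolding f_def using nb[OF that] by (rule someI_ex)
  obtain t where t: "t \<in> VT" "f (f t) = t" using tree_two_cycle[OF T] fp by blast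
  have ft: "f t \<in> VT" using fp[OF t(1)] tree_edge_in[OF T] by blast
  have e: "{t, f t} \<in> ET" and b1: "Br_cycle VT ET bag t (Cc t) = Br VT ET t (f t)"
    using fp[OF t(1)] by auto
  have b2: "Br_cycle VT ET bag (f t) (Cc (f t)) = Br VT ET (f t) t"
    using fp[OF ft] t(2) by simp
  show ?thesis
    using e b1 b2 Cc[OF t(1)] Cc[OF ft] by blast
qed

end
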